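(* Let $G$ be a loopless graph and $n$ a positive integer. If $c$ and $d$ are two proper $n$-edge colorings of $G$ with $c\sim d$, and there is a vertex $v$ such that $c(e)=d(e)$ for every edge $e$ incident to $v$, then there exists a sequence of edge-Kempe switches transforming $c$ into $d$ in which the colors on the edges incident to $v$ are never changed.
   Context: Graphs are finite and may have multiple edges. A proper $n$-edge coloring assigns to each edge a color from $\{1,\dots,n\}$ so that edges sharing an endpoint receive different colors. For a proper edge coloring and two distinct colors $a,b$, an edge-Kempe chain is a connected component of the subgraph formed by the edges colored $a$ or $b$; an edge-Kempe switch interchanges the colors $a$ and $b$ on one such chain, producing another proper edge coloring. We write $c\sim d$ if $d$ can be obtained from $c$ by a finite sequence of edge-Kempe switches. *)

theory Defs
  imports Main
begin

text \<open>Parallel edges are allowed (distinct edges may have the same endpoints).\<close>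
definition loopless_multigraph :: "'v set \<Rightarrow> 'e set \<Rightarrow> ('e \<Rightarrow> 'v set) \<Rightarrow> bool" where
  "loopless_multigraph V E ends \<longleftrightarrow> finite V \<and> finite E \<and>
     (\<forall>e\<in>E. ends e \<subseteq> V \<and> card (ends e) = 2)"

text \<open>Proper n-edge colouring (colours 1..n); colourings are identified with their
  values on E, so we normalise them to 0 outside E.\<close>
definition proper_edge_coloring ::
  "'e set \<Rightarrow> ('e \<Rightarrow> 'v set) \<Rightarrow> nat \<Rightarrow> ('e \<Rightarrow> nat) \<Rightarrow> bool" where
  "proper_edge_coloring E ends n c \<longleftrightarrow>
     (\<forall>e\<in>E. c e \<in> {1..n}) \<and> (\<forall>e. e \<notin> E \<longrightarrow> c e = 0) \<and>
     (\<forall>e\<in>E. \<forall>f\<in>E. e \<noteq> f \<and> ends e \<inter> ends f \<noteq> {} \<longrightarrow> c e \<noteq> c f)"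

definition ab_adj :: "'e set \<Rightarrow> ('e \<Rightarrow> 'v set) \<Rightarrow> ('e \<Rightarrow> nat) \<Rightarrow> nat \<Rightarrow> nat \<Rightarrow> 'e \<Rightarrow> 'e \<Rightarrow> bool" where
  "ab_adj E ends c a b e f \<longleftrightarrow> e \<in> E \<and> f \<in> E \<and> c e \<in> {a, b} \<and> c f \<in> {a, b} \<and>
     ends e \<inter> ends f \<noteq> {}"

definition kempe_chain :: "'e set \<Rightarrow> ('e \<Rightarrow> 'v set) \<Rightarrow> ('e \<Rightarrow> nat) \<Rightarrow> nat \<Rightarrow> nat \<Rightarrow> 'e set \<Rightarrow> bool" where
  "kempe_chain E ends c a b K \<longleftrightarrow>
     (\<exists>e0\<in>E. c e0 \<in> {a, b} \<and> K = {f. (ab_adj E ends c a b)\<^sup>*\<^sup>* e0 f})"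

definition kempe_switch :: "('e \<Rightarrow> nat) \<Rightarrow> nat \<Rightarrow> nat \<Rightarrow> 'e set \<Rightarrow> 'e \<Rightarrow> nat" where
  "kempe_switch c a b K = (\<lambda>e. if e \<in> K then (if c e = a then b else a) else c e)"

definition kempe_step :: "'e set \<Rightarrow> ('e \<Rightarrow> 'v set) \<Rightarrow> nat \<Rightarrow> ('e \<Rightarrow> nat) \<Rightarrow> ('e \<Rightarrow> nat) \<Rightarrow> bool" where
  "kempe_step E ends n c d \<longleftrightarrow>
     (\<exists>a b K. a \<in> {1..n} \<and> b \<in> {1..n} \<and> a \<noteq> b \<and> kempe_chain E ends c a b K \<and>
        d = kempe_switch c a b K)"

text \<open>c \<sim> d : d is obtained from c by finitely many edge-Kempe switches.\<close>
definition kempe_equiv :: "'e set \<Rightarrow> ('e \<Rightarrow> 'v set) \<Rightarrow> nat \<Rightarrow> ('e \<Rightarrow> nat) \<Rightarrow> ('e \<Rightarrow> nat) \<Rightarrow> bool" where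
  "kempe_equiv E ends n = (kempe_step E ends n)\<^sup>*\<^sup>*"

definition kempe_step_fixing :: "'e set \<Rightarrow> ('e \<Rightarrow> 'v set) \<Rightarrow> nat \<Rightarrow> 'v \<Rightarrow> ('e \<Rightarrow> nat) \<Rightarrow> ('e \<Rightarrow> nat) \<Rightarrow> bool" where
  "kempe_step_fixing E ends n v c d \<longleftrightarrow>
     kempe_step E ends n c d \<and> (\<forall>e\<in>E. v \<in> ends e \<longrightarrow> c e = d e)"

end

theory Submission
  imports Defs
begin

definition sw :: "nat \<Rightarrow> nat \<Rightarrow> nat \<Rightarrow> nat" where
  "sw a b k = (if k = a then b else if k = b then a else k)"

lemma sw_sw: "sw a b (sw a b k) = k" by (auto simp: sw_def)
lemma inj_sw: "inj (sw a b)" by (metis injI sw_sw)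

lemma fixing_agree:
  "(kempe_step_fixing E ends n v)\<^sup>*\<^sup>* x y \<Longrightarrow> \<forall>e\<in>E. v \<in> ends e \<longrightarrow> x e = y e"
  by (induction rule: rtranclp_induct) (auto simp: kempe_step_fixing_def)

lemma switch_union:
  assumes fin: "finite E" and ab: "a \<in> {1..n}" "b \<in> {1..n}" "a \<noteq> b"
  shows "S \<subseteq> E \<Longrightarrow> (\<forall>e\<in>S. y e \<in> {a,b} \<and> v \<notin> ends e) \<Longrightarrow>
    (\<forall>e f. e \<in> S \<longrightarrow> ab_adj E ends y a b e f \<longrightarrow> f \<in> S) \<Longrightarrow>
    (kempe_step_fixing E ends n v)\<^sup>*\<^sup>* y (kempe_switch y a b S)"
proof (induction "card S" arbitrary: S y rule: less_induct)
  case less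
  show ?case
  proof (cases "S = {}")
    case True then show ?thesis by (simp add: kempe_switch_def)
  next
    case False
    then obtain e0 where e0: "e0 \<in> S" by auto
    define K where "K = {f. (ab_adj E ends y a b)\<^sup>*\<^sup>* e0 f}"
    have KS: "K \<subseteq> S"
    proof
      fix f assume "f \<in> K"
      then have "(ab_adj E ends y a b)\<^sup>*\<^sup>* e0 f" by (simp add: K_def)
      then show "f \<in> S" by induction (use e0 less.prems(3) in auto)
    qed
    have chain: "kempe_chain E ends y a b K" unfolding kempe_chain_def
      using e0 less.prems K_def by blast
    define y1 where "y1 = kempe_switch y a b K"
    have step: "kempe_step_fixing E ends n v y y1"
      unfolding kempe_step_fixing_def kempe_step_def y1_def
      using ab chain KS less.prems(2) by (auto simp: kempe_switch_def)
    have same: "\<And>e. (y1 e \<in> {a,b}) = (y e \<in> {a,b})"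
      using KS less.prems(2) by (auto simp: y1_def kempe_switch_def)
    have adj: "\<And>e f. ab_adj E ends y1 a b e f = ab_adj E ends y a b e f"
      unfolding ab_adj_def using same by blast
    have e0K: "e0 \<in> K" by (simp add: K_def)
    have card: "card (S - K) < card S"
    proof (rule psubset_card_mono)
      show "finite S" using finite_subset[OF less.prems(1) fin] .
      show "S - K \<subset> S" using e0K e0 by blast
    qed
    have closed: "\<forall>e f. e \<in> S-K \<longrightarrow> ab_adj E ends y1 a b e f \<longrightarrow> f \<in> S-K"
    proof (intro allI impI)
      fix e f assume e: "e\<in>S-K" and ef: "ab_adj E ends y1 a b e f"
      have ef': "ab_adj E ends y a b e f" using ef by (simp only: adj)
      have "f\<in>S" using e ef' less.prems(3) by blast
      moreover have "f \<notin> K"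
      proof
        assume "f\<in>K"
        then have "(ab_adj E ends y a b)\<^sup>*\<^sup>* e0 f" by (simp add: K_def)
        moreover have "ab_adj E ends y a b f e" using ef' by (auto simp: ab_adj_def)
        ultimately have "(ab_adj E ends y a b)\<^sup>*\<^sup>* e0 e" by (rule rtranclp.rtrancl_into_rtrancl)
        then show False using e by (simp add: K_def)
      qed
      ultimately show "f \<in> S-K" by simp
    qed
    have IH: "(kempe_step_fixing E ends n v)\<^sup>*\<^sup>* y1 (kempe_switch y1 a b (S-K))"
    proof (rule less.hyps[OF card])
      show "S - K \<subseteq> E" using less.prems(1) by blast
      show "\<forall>e\<in>S - K. y1 e \<in> {a, b} \<and> v \<notin> ends e"
        using less.prems(2) same by blast
      show "\<forall>e f. e \<in> S - K \<longrightarrow> ab_adj E ends y1 a b e f \<longrightarrow> f \<in> S - K"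
        by (rule closed)
    qed
    have eq: "kempe_switch y1 a b (S-K) = kempe_switch y a b S"
      using KS unfolding y1_def kempe_switch_def by (auto simp: fun_eq_iff)
    show ?thesis using step IH eq by (metis converse_rtranclp_into_rtranclp)
  qed
qed

lemma rtr_sym:
  assumes "(ab_adj E ends x a b)\<^sup>*\<^sup>* p q" shows "(ab_adj E ends x a b)\<^sup>*\<^sup>* q p"
  using assms
proof (induction rule: rtranclp_induct)
  case base then show ?case by simp
next
  case (step q r)
  have "ab_adj E ends x a b r q" using step.hyps(2) by (auto simp: ab_adj_def)
  then show ?case using step.IH by (rule converse_rtranclp_into_rtranclp)
qed

lemma main:
  assumes fin: "finite E" and c0: "\<forall>e. e \<notin> E \<longrightarrow> c e = 0"
  shows "(kempe_step E ends n)\<^sup>*\<^sup>* c x \<Longrightarrow> (\<forall>e. e \<notin> E \<longrightarrow> x e = 0) \<and> (\<exists>\<pi>. inj \<pi> \<and> (\<forall>k. k \<notin> {1..n} \<longrightarrow> \<pi> k = k) \<and>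
           (kempe_step_fixing E ends n v)\<^sup>*\<^sup>* c (\<pi> \<circ> x))"
proof (induction rule: rtranclp_induct)
  case base show ?case using c0 by (intro conjI exI[of _ id]) auto
next
  case (step x x')
  from step.IH have x0: "\<forall>e. e \<notin> E \<longrightarrow> x e = 0" by blast
  from step.IH obtain \<pi> where inj: "inj \<pi>" and fx: "\<forall>k. k\<notin>{1..n} \<longrightarrow> \<pi> k = k"
    and F: "(kempe_step_fixing E ends n v)\<^sup>*\<^sup>* c (\<pi> \<circ> x)" by blast
  from step.hyps(2) obtain a b K where ab: "a\<in>{1..n}" "b\<in>{1..n}" "a\<noteq>b"
    and ch: "kempe_chain E ends x a b K" and x': "x' = kempe_switch x a b K"
    unfolding kempe_step_def by blast
  have pin: "\<And>k. k\<in>{1..n} \<Longrightarrow> \<pi> k \<in> {1..n}"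
    using inj fx by (metis injD)
  define a' where "a' = \<pi> a"
  define b' where "b' = \<pi> b"
  have ab': "a'\<in>{1..n}" "b'\<in>{1..n}" "a'\<noteq>b'" using pin ab inj
    by (auto simp: a'_def b'_def dest: injD)
  let ?y = "\<pi> \<circ> x"
  have iff: "\<And>e. (?y e \<in> {a',b'}) = (x e \<in> {a,b})" using inj
    by (auto simp: a'_def b'_def dest: injD)
  have adj1: "\<And>e f. ab_adj E ends ?y a' b' e f = ab_adj E ends x a b e f"
    unfolding ab_adj_def using iff by blast
  have adj: "ab_adj E ends ?y a' b' = ab_adj E ends x a b"
    using adj1 by (intro ext) blast
  obtain e0 where e0: "e0\<in>E" "x e0 \<in> {a,b}" and K: "K = {f. (ab_adj E ends x a b)\<^sup>*\<^sup>* e0 f}"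
    using ch unfolding kempe_chain_def by blast
  have Kprops: "f\<in>E \<and> x f \<in> {a,b}" if "f \<in> K" for f
  proof -
    have "(ab_adj E ends x a b)\<^sup>*\<^sup>* e0 f" using that K by simp
    then show ?thesis by induction (use e0 in \<open>auto simp: ab_adj_def\<close>)
  qed
  have x'0: "\<forall>e. e \<notin> E \<longrightarrow> x' e = 0"
    using x0 Kprops unfolding x' kempe_switch_def by auto
  have chy: "kempe_chain E ends ?y a' b' K" unfolding kempe_chain_def adj
    using e0 K iff by blast
  show ?case
  proof (cases "\<exists>e\<in>K. v \<in> ends e")
    case False
    have stp: "kempe_step_fixing E ends n v ?y (kempe_switch ?y a' b' K)"
      unfolding kempe_step_fixing_def kempe_step_def using ab' chy False
      by (auto simp: kempe_switch_def)
    have eq: "kempe_switch ?y a' b' K = \<pi> \<circ> x'" unfolding x' kempe_switch_def a'_def b'_def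
      using inj by (auto simp: fun_eq_iff dest: injD)
    have "(kempe_step_fixing E ends n v)\<^sup>*\<^sup>* c (\<pi> \<circ> x')"
      using F stp unfolding eq by (meson rtranclp.rtrancl_into_rtrancl)
    then show ?thesis using inj fx x'0 by blast
  next
    case True
    then obtain g where g: "g\<in>K" "v\<in>ends g" by blast
    define S where "S = {e\<in>E. x e \<in> {a,b}} - K"
    have noV: "v \<notin> ends e" if "e \<in> S" for e
    proof
      assume ve: "v \<in> ends e"
      have "ab_adj E ends x a b g e" using Kprops[OF g(1)] g(2) ve that
        unfolding ab_adj_def S_def by blast
      moreover have "(ab_adj E ends x a b)\<^sup>*\<^sup>* e0 g" using g(1) K by simp
      ultimately have "(ab_adj E ends x a b)\<^sup>*\<^sup>* e0 e" by (metis rtranclp.rtrancl_into_rtrancl)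
      then show False using that unfolding S_def K by simp
    qed
    have FS: "(kempe_step_fixing E ends n v)\<^sup>*\<^sup>* ?y (kempe_switch ?y a' b' S)"
    proof (rule switch_union[OF fin ab'])
      show "S \<subseteq> E" unfolding S_def by blast
      show "\<forall>e\<in>S. ?y e \<in> {a', b'} \<and> v \<notin> ends e" using noV iff unfolding S_def by blast
      show "\<forall>e f. e \<in> S \<longrightarrow> ab_adj E ends ?y a' b' e f \<longrightarrow> f \<in> S"
      proof (intro allI impI)
        fix e f assume e: "e \<in> S" and ef: "ab_adj E ends ?y a' b' e f"
        then have ef': "ab_adj E ends x a b e f" by (simp only: adj1)
        have fE: "f \<in> E \<and> x f \<in> {a,b}" using ef' unfolding ab_adj_def by blast
        have "f \<notin> K"
        proof
          assume "f \<in> K"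
          then have "(ab_adj E ends x a b)\<^sup>*\<^sup>* e0 f" using K by simp
          moreover have "ab_adj E ends x a b f e" using ef' by (auto simp: ab_adj_def)
          ultimately have "(ab_adj E ends x a b)\<^sup>*\<^sup>* e0 e" by (rule rtranclp.rtrancl_into_rtrancl)
          then show False using e unfolding S_def K by simp
        qed
        then show "f \<in> S" using fE unfolding S_def by blast
      qed
    qed
    have eq: "kempe_switch ?y a' b' S = (\<pi> \<circ> sw a b) \<circ> x'"
    proof
      fix e
      show "kempe_switch ?y a' b' S e = ((\<pi> \<circ> sw a b) \<circ> x') e"
      proof (cases "e \<in> K")
        case True
        then have "x e \<in> {a,b}" "e \<notin> S" using Kprops unfolding S_def by auto
        then show ?thesis using True ab(3) unfolding x' kempe_switch_def sw_def by auto
      next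
        case False
        have x'e: "x' e = x e" using False unfolding x' kempe_switch_def by simp
        show ?thesis
        proof (cases "e \<in> S")
          case True
          then have xe: "x e = a \<or> x e = b" unfolding S_def by blast
          have "\<pi> b \<noteq> \<pi> a" using inj ab(3) by (metis injD)
          then show ?thesis using xe True ab(3) unfolding kempe_switch_def x'e[symmetric] a'_def b'_def
            by (auto simp: x'e sw_def)
        next
          case F2: False
          then have "x e \<noteq> a \<and> x e \<noteq> b" using False x0 ab unfolding S_def
            by (cases "e \<in> E") auto
          then show ?thesis using F2 unfolding kempe_switch_def by (simp add: x'e sw_def)
        qed
      qed
    qed
    have inj': "inj (\<pi> \<circ> sw a b)" using inj inj_sw by (rule inj_compose)
    have fx': "\<forall>k. k \<notin> {1..n} \<longrightarrow> (\<pi> \<circ> sw a b) k = k" using fx ab by (auto simp: sw_def)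
    have "(kempe_step_fixing E ends n v)\<^sup>*\<^sup>* c ((\<pi> \<circ> sw a b) \<circ> x')"
      using F FS unfolding eq by (meson rtranclp_trans)
    then show ?thesis using inj' fx' x'0 by blast
  qed
qed


lemma finish:
  assumes fin: "finite E" and d0: "\<forall>e. e \<notin> E \<longrightarrow> d e = 0"
  shows "inj \<pi> \<Longrightarrow> (\<forall>k. k \<notin> {1..n} \<longrightarrow> \<pi> k = k) \<Longrightarrow> (\<forall>e\<in>E. v \<in> ends e \<longrightarrow> \<pi> (d e) = d e)
    \<Longrightarrow> (kempe_step_fixing E ends n v)\<^sup>*\<^sup>* (\<pi> \<circ> d) d"
proof (induction "card {k\<in>{1..n}. \<pi> k \<noteq> k}" arbitrary: \<pi> rule: less_induct)
  case less
  note inj = less.prems(1) and fx = less.prems(2) and fv = less.prems(3)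
  show ?case
  proof (cases "\<exists>k\<in>{1..n}. \<pi> k \<noteq> k")
    case False
    then have "\<pi> = id" using fx by (auto simp: fun_eq_iff)
    then show ?thesis by simp
  next
    case True
    then obtain k where k: "k\<in>{1..n}" "\<pi> k \<noteq> k" by blast
    define j where "j = \<pi> k"
    have j: "j \<in> {1..n}" "j \<noteq> k" using k inj fx unfolding j_def by (metis injD, simp)
    define \<rho> where "\<rho> = sw j k \<circ> \<pi>"
    let ?y = "\<pi> \<circ> d"
    define S where "S = {e\<in>E. ?y e \<in> {j,k}}"
    have vcol: "d e \<noteq> j \<and> d e \<noteq> k" if "e \<in> E" "v \<in> ends e" for e
    proof -
      have pe: "\<pi> (d e) = d e" using fv that by blast
      show ?thesis
      proof
        show "d e \<noteq> k" using pe k(2) by auto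
        show "d e \<noteq> j"
        proof
          assume "d e = j"
          then have "\<pi> (d e) = \<pi> k" using pe j_def by simp
          then have "d e = k" using inj by (metis injD)
          then show False using pe k(2) by simp
        qed
      qed
    qed
    have noV: "\<forall>e\<in>S. ?y e \<in> {j,k} \<and> v \<notin> ends e"
    proof
      fix e assume e: "e \<in> S"
      then have eE: "e \<in> E" and c: "?y e \<in> {j,k}" unfolding S_def by auto
      show "?y e \<in> {j,k} \<and> v \<notin> ends e"
      proof (intro conjI notI c)
        assume "v \<in> ends e"
        then have "\<pi> (d e) = d e" "d e \<noteq> j \<and> d e \<noteq> k" using fv eE vcol by auto
        then show False using c by auto
      qed
    qed
    have FS: "(kempe_step_fixing E ends n v)\<^sup>*\<^sup>* ?y (kempe_switch ?y j k S)"
    proof (rule switch_union[OF fin j(1) k(1) j(2)])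
      show "S \<subseteq> E" unfolding S_def by blast
      show "\<forall>e\<in>S. ?y e \<in> {j, k} \<and> v \<notin> ends e" by (rule noV)
      show "\<forall>e f. e \<in> S \<longrightarrow> ab_adj E ends ?y j k e f \<longrightarrow> f \<in> S"
        unfolding S_def ab_adj_def by blast
    qed
    have p0: "\<pi> 0 = 0" using fx by simp
    have eq: "kempe_switch ?y j k S = \<rho> \<circ> d"
    proof
      fix e
      show "kempe_switch ?y j k S e = (\<rho> \<circ> d) e"
      proof (cases "e \<in> E")
        case True
        then show ?thesis using j(2) unfolding kempe_switch_def \<rho>_def S_def sw_def by auto
      next
        case False
        then have "e \<notin> S" "d e = 0" using d0 unfolding S_def by auto
        then show ?thesis using j k p0 unfolding kempe_switch_def \<rho>_def sw_def by auto
      qed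
    qed
    have inj': "inj \<rho>" unfolding \<rho>_def using inj_sw inj by (rule inj_compose)
    have fx': "\<forall>m. m \<notin> {1..n} \<longrightarrow> \<rho> m = m" using fx j k unfolding \<rho>_def sw_def by auto
    have fv': "\<forall>e\<in>E. v \<in> ends e \<longrightarrow> \<rho> (d e) = d e"
      using fv vcol unfolding \<rho>_def sw_def by auto
    have sub: "{m\<in>{1..n}. \<rho> m \<noteq> m} \<subset> {m\<in>{1..n}. \<pi> m \<noteq> m}"
    proof
      show "{m\<in>{1..n}. \<rho> m \<noteq> m} \<subseteq> {m\<in>{1..n}. \<pi> m \<noteq> m}"
      proof
        fix m assume m: "m \<in> {m\<in>{1..n}. \<rho> m \<noteq> m}"
        show "m \<in> {m\<in>{1..n}. \<pi> m \<noteq> m}"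
        proof (rule ccontr)
          assume "m \<notin> {m\<in>{1..n}. \<pi> m \<noteq> m}"
          then have pm: "\<pi> m = m" using m by auto
          have "m \<noteq> k" using pm k by auto
          moreover have "m \<noteq> j"
          proof
            assume "m = j" then have "\<pi> m = \<pi> k" using pm j_def by simp
            then show False using inj \<open>m \<noteq> k\<close> by (metis injD)
          qed
          ultimately have "\<rho> m = m" unfolding \<rho>_def sw_def using pm by simp
          then show False using m by simp
        qed
      qed
      have "\<rho> k = k" unfolding \<rho>_def sw_def j_def by simp
      then show "{m\<in>{1..n}. \<rho> m \<noteq> m} \<noteq> {m\<in>{1..n}. \<pi> m \<noteq> m}" using k by blast
    qed
    have "card {m\<in>{1..n}. \<rho> m \<noteq> m} < card {m\<in>{1..n}. \<pi> m \<noteq> m}"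
      by (rule psubset_card_mono[OF _ sub]) simp
    then have IH: "(kempe_step_fixing E ends n v)\<^sup>*\<^sup>* (\<rho> \<circ> d) d"
      using less.hyps inj' fx' fv' by blast
    show ?thesis using FS IH unfolding eq by (meson rtranclp_trans)
  qed
qed

theorem theorem5:
  fixes V :: "'v set" and E :: "'e set" and ends :: "'e \<Rightarrow> 'v set"
    and n :: nat and c d :: "'e \<Rightarrow> nat" and v :: 'v
  assumes "loopless_multigraph V E ends"
    and "n \<ge> 1"
    and "proper_edge_coloring E ends n c"
    and "proper_edge_coloring E ends n d"
    and "kempe_equiv E ends n c d"
    and "v \<in> V"
    and "\<forall>e\<in>E. v \<in> ends e \<longrightarrow> c e = d e"
  shows "(kempe_step_fixing E ends n v)\<^sup>*\<^sup>* c d"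
proof -
  have fin: "finite E" using assms(1) unfolding loopless_multigraph_def by blast
  have c0: "\<forall>e. e \<notin> E \<longrightarrow> c e = 0" and d0: "\<forall>e. e \<notin> E \<longrightarrow> d e = 0"
    using assms(3,4) unfolding proper_edge_coloring_def by blast+
  have "(kempe_step E ends n)\<^sup>*\<^sup>* c d" using assms(5) unfolding kempe_equiv_def .
  from main[OF fin c0 this] obtain \<pi> where inj: "inj \<pi>" and fx: "\<forall>k. k \<notin> {1..n} \<longrightarrow> \<pi> k = k"
    and F: "(kempe_step_fixing E ends n v)\<^sup>*\<^sup>* c (\<pi> \<circ> d)" by blast
  have "\<forall>e\<in>E. v \<in> ends e \<longrightarrow> c e = (\<pi> \<circ> d) e" using fixing_agree[OF F] .
  then have fv: "\<forall>e\<in>E. v \<in> ends e \<longrightarrow> \<pi> (d e) = d e" using assms(7) by auto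
  have "(kempe_step_fixing E ends n v)\<^sup>*\<^sup>* (\<pi> \<circ> d) d" by (rule finish[OF fin d0 inj fx fv])
  then show ?thesis using F by (meson rtranclp_trans)
qed

end
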